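(* Let $E$ be a separable metric space with distance $d$, $m$ a probability measure on $E$ with full support, and for each $N\ge1$ let $E_N\subset E$, let $m_N$ be a probability measure on $E_N$ with $m_N\to m$ weakly, and let $\pi_N:E\to E_N$ be a map with $d(x,\pi_N(x))=\inf_{y\in E_N}d(x,y)$ for all $x\in E$. Let $F_N:E_N\to\mathbb R$, $N\ge1$, satisfy $\sup_N\|F_N\|_\infty<\infty$ and $\omega(\delta):=\sup_{N\ge1}\sup\{|F_N(x)-F_N(y)|:x,y\in E_N,\,d(x,y)\le\delta\}\to0$ as $\delta\downarrow0$. Then there exist a bounded uniformly continuous $F:E\to\mathbb R$ and a subsequence $(N_j)_{j\ge1}$ such that: (1) for every compact $J\subset E$, $\sup_{x\in J\cap E_{N_j}}|F(x)-F_{N_j}(x)|\to0$ as $j\to\infty$; (2) $F_{N_j}(\pi_{N_j}x)\to F(x)$ for all $x\in E$. *)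

theory Defs
  imports "HOL-Analysis.Analysis" "HOL-Probability.Probability"
begin

text \<open>A measure on a subset is integrated against the restriction of f.\<close>
definition weak_conv_on :: "(nat \<Rightarrow> 'a::metric_space measure) \<Rightarrow> 'a measure \<Rightarrow> bool" where
  "weak_conv_on M m \<longleftrightarrow>
     (\<forall>f :: 'a \<Rightarrow> real. continuous_on UNIV f \<and> bounded (range f) \<longrightarrow>
        (\<lambda>N. integral\<^sup>L (M N) f) \<longlonglongrightarrow> integral\<^sup>L m f)"

definition unif_modulus :: "(nat \<Rightarrow> 'a::metric_space set) \<Rightarrow> (nat \<Rightarrow> 'a \<Rightarrow> real) \<Rightarrow> real \<Rightarrow> real" where
  "unif_modulus E F \<delta> =
     (SUP N. SUP p \<in> {(x, y). x \<in> E N \<and> y \<in> E N \<and> dist x y \<le> \<delta>}. \<bar>F N (fst p) - F N (snd p)\<bar>)"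

end

theory Submission
  imports Defs "HOL-Library.Diagonal_Subsequence"
begin

lemma dense_lemma:
  fixes m :: "'a::metric_space measure"
    and E :: "nat \<Rightarrow> 'a set"
    and M :: "nat \<Rightarrow> 'a measure"
  assumes m_prob: "prob_space m" and m_sets: "sets m = sets borel"
    and m_supp: "\<And>U. open U \<Longrightarrow> U \<noteq> {} \<Longrightarrow> measure m U > 0"
    and M_space: "\<And>N. space (M N) = E N"
    and weak: "weak_conv_on M m"
    and eps: "\<epsilon> > 0"
  shows "\<forall>\<^sub>F N in sequentially. \<exists>y\<in>E N. dist x y < \<epsilon>"
proof -
  interpret prob_space m by (rule m_prob)
  define f where "f = (\<lambda>y. max 0 (\<epsilon> - dist x y))"
  have cont: "continuous_on UNIV f" unfolding f_def by (intro continuous_intros)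
  have fb: "\<And>y. \<bar>f y\<bar> \<le> \<epsilon>" unfolding f_def using eps by auto
  have bdd: "bounded (range f)" unfolding bounded_real using fb by auto
  have lim: "(\<lambda>N. integral\<^sup>L (M N) f) \<longlonglongrightarrow> integral\<^sup>L m f"
    using weak cont bdd unfolding weak_conv_on_def by blast
  have sp: "space m = UNIV" using sets_eq_imp_space_eq[OF m_sets] by simp
  have meas: "f \<in> borel_measurable m"
    using borel_measurable_continuous_onI[OF cont] measurable_cong_sets[OF m_sets refl] by blast
  have intf: "integrable m f"
    by (rule integrable_const_bound[where B=\<epsilon>]) (use fb meas in auto)
  have bs: "ball x (\<epsilon>/2) \<in> sets m" using m_sets by simp
  have inti: "integrable m (\<lambda>y. \<epsilon>/2 * indicator (ball x (\<epsilon>/2)) y)"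
    using bs by (intro integrable_mult_right integrable_real_indicator) (auto simp: emeasure_eq_measure)
  have "integral\<^sup>L m (\<lambda>y. \<epsilon>/2 * indicator (ball x (\<epsilon>/2)) y) \<le> integral\<^sup>L m f"
  proof (rule integral_mono[OF inti intf])
    fix y show "\<epsilon>/2 * indicator (ball x (\<epsilon>/2)) y \<le> f y"
      unfolding f_def using eps by (auto simp: indicator_def)
  qed
  moreover have "integral\<^sup>L m (\<lambda>y. \<epsilon>/2 * indicator (ball x (\<epsilon>/2)) y) = \<epsilon>/2 * measure m (ball x (\<epsilon>/2))"
    using sp by simp
  moreover have "measure m (ball x (\<epsilon>/2)) > 0" using m_supp eps by auto
  moreover have "\<epsilon>/2 * measure m (ball x (\<epsilon>/2)) > 0"
    using calculation(3) eps by simp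
  ultimately have pos: "integral\<^sup>L m f > 0" by linarith
  have ev: "\<forall>\<^sub>F N in sequentially. integral\<^sup>L (M N) f > 0"
    using order_tendstoD(1)[OF lim pos] .
  show ?thesis
  proof (rule eventually_mono[OF ev])
    fix N assume p: "integral\<^sup>L (M N) f > 0"
    show "\<exists>y\<in>E N. dist x y < \<epsilon>"
    proof (rule ccontr)
      assume "\<not> ?thesis"
      then have "\<And>y. y \<in> space (M N) \<Longrightarrow> f y = 0" unfolding f_def M_space by force
      then have "integral\<^sup>L (M N) f = integral\<^sup>L (M N) (\<lambda>_. 0::real)"
        by (intro Bochner_Integration.integral_cong) auto
      then show False using p by simp
    qed
  qed
qed

lemma sup_bound:
  fixes g :: "nat \<Rightarrow> 'b \<Rightarrow> real"
  assumes ne: "\<And>N. S N \<noteq> {}" and b: "\<And>N p. p \<in> S N \<Longrightarrow> \<bar>g N p\<bar> \<le> C"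
    and p: "p \<in> S N"
  shows "g N p \<le> (SUP N. SUP p\<in>S N. g N p)"
proof -
  have bi: "\<And>N. bdd_above (g N ` S N)"
    using b by (intro bdd_aboveI2[where M=C]) (auto simp: abs_le_iff)
  have le: "\<And>N. (SUP p\<in>S N. g N p) \<le> C"
    using b ne by (intro cSUP_least) (auto simp: abs_le_iff)
  have bo: "bdd_above (range (\<lambda>N. SUP p\<in>S N. g N p))"
    using le by (intro bdd_aboveI2[where M=C]) auto
  have "g N p \<le> (SUP p\<in>S N. g N p)" by (rule cSUP_upper[OF p bi])
  also have "\<dots> \<le> (SUP N. SUP p\<in>S N. g N p)" by (rule cSUP_upper[OF _ bo]) simp
  finally show ?thesis .
qed

theorem theorem2p7:
  fixes m :: "'a::metric_space measure"
    and E :: "nat \<Rightarrow> 'a set"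
    and M :: "nat \<Rightarrow> 'a measure"
    and \<pi> :: "nat \<Rightarrow> 'a \<Rightarrow> 'a"
    and F :: "nat \<Rightarrow> 'a \<Rightarrow> real"
  assumes sep: "separable_space (euclidean :: 'a topology)"
    and m_prob: "prob_space m" and m_sets: "sets m = sets borel"
    and m_supp: "\<And>U. open U \<Longrightarrow> U \<noteq> {} \<Longrightarrow> measure m U > 0"
    and M_prob: "\<And>N. prob_space (M N)"
    and M_sets: "\<And>N. sets (M N) = sets (restrict_space borel (E N))"
    and M_space: "\<And>N. space (M N) = E N"
    and weak: "weak_conv_on M m"
    and \<pi>_in: "\<And>N x. \<pi> N x \<in> E N"
    and \<pi>_dist: "\<And>N x. dist x (\<pi> N x) = infdist x (E N)"
    and F_bdd: "\<exists>B. \<forall>N. \<forall>x\<in>E N. \<bar>F N x\<bar> \<le> B"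
    and F_mod: "(unif_modulus E F \<longlongrightarrow> 0) (at_right 0)"
  shows "\<exists>G :: 'a \<Rightarrow> real. \<exists>r :: nat \<Rightarrow> nat.
           bounded (range G) \<and> uniformly_continuous_on UNIV G \<and> strict_mono r \<and>
           (\<forall>J. compact J \<longrightarrow>
              (\<forall>\<epsilon>>0. \<forall>\<^sub>F j in sequentially. \<forall>x\<in>J \<inter> E (r j). \<bar>G x - F (r j) x\<bar> \<le> \<epsilon>)) \<and>
           (\<forall>x. (\<lambda>j. F (r j) (\<pi> (r j) x)) \<longlonglongrightarrow> G x)"
proof -
  obtain B where B: "\<And>N x. x \<in> E N \<Longrightarrow> \<bar>F N x\<bar> \<le> B" using F_bdd by blast
  have dens: "(\<lambda>N. \<pi> N x) \<longlonglongrightarrow> x" for x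
  proof (rule tendstoI)
    fix e :: real assume e: "e > 0"
    show "\<forall>\<^sub>F N in sequentially. dist (\<pi> N x) x < e"
    proof (rule eventually_mono[OF dense_lemma[OF m_prob m_sets m_supp M_space weak e, of x]])
      fix N assume "\<exists>y\<in>E N. dist x y < e"
      then obtain y where "y \<in> E N" "dist x y < e" by blast
      then have "infdist x (E N) < e" using infdist_le[of y "E N" x] by linarith
      then show "dist (\<pi> N x) x < e" using \<pi>_dist[of x N] by (simp add: dist_commute)
    qed
  qed
  have modl: "\<exists>\<delta>>0. \<forall>N. \<forall>x\<in>E N. \<forall>y\<in>E N. dist x y < \<delta> \<longrightarrow> \<bar>F N x - F N y\<bar> < \<epsilon>"
    if e: "\<epsilon> > 0" for \<epsilon>
  proof -
    have "\<forall>\<^sub>F \<delta> in at_right 0. dist (unif_modulus E F \<delta>) 0 < \<epsilon>"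
      using tendstoD[OF F_mod e] .
    then obtain b :: real where b: "b > 0" "\<And>y. y > 0 \<Longrightarrow> y < b \<Longrightarrow> \<bar>unif_modulus E F y\<bar> < \<epsilon>"
      unfolding eventually_at_right_field by auto
    have w: "\<bar>unif_modulus E F (b/2)\<bar> < \<epsilon>" using b by simp
    show ?thesis
    proof (intro exI[of _ "b/2"] conjI allI ballI impI)
      show "b/2 > 0" using b by simp
      fix N x y assume xy: "x \<in> E N" "y \<in> E N" "dist x y < b/2"
      define S where "S = (\<lambda>N. {(x, y). x \<in> E N \<and> y \<in> E N \<and> dist x y \<le> b/2})"
      have "(\<lambda>N p. \<bar>F N (fst p) - F N (snd p)\<bar>) N (x, y) \<le>
            (SUP N. SUP p\<in>S N. (\<lambda>N p. \<bar>F N (fst p) - F N (snd p)\<bar>) N p)"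
      proof (rule sup_bound[where C="2*B"])
        fix N have "(\<pi> N x, \<pi> N x) \<in> S N" unfolding S_def using \<pi>_in[of N x] b by simp
        then show "S N \<noteq> {}" by blast
      next
        fix N p assume "p \<in> S N"
        then show "\<bar>\<bar>F N (fst p) - F N (snd p)\<bar>\<bar> \<le> 2*B" unfolding S_def
          using B[of "fst p" N] B[of "snd p" N] by auto
      next
        show "(x, y) \<in> S N" unfolding S_def using xy by auto
      qed
      also have "\<dots> = unif_modulus E F (b/2)" unfolding unif_modulus_def S_def by simp
      finally show "\<bar>F N x - F N y\<bar> < \<epsilon>" using w by simp
    qed
  qed
  obtain C :: "'a set" where C: "countable C" "closure C = UNIV"
    using sep unfolding separable_space_def euclidean_closure_of topspace_euclidean by blast
  have Cne: "C \<noteq> {}" using C(2) by auto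
  define d where "d = from_nat_into C"
  have drange: "range d = C" unfolding d_def using Cne C(1) by simp
  define a where "a = (\<lambda>k N. F N (\<pi> N (d k)))"
  have abd: "\<bar>a k N\<bar> \<le> B" for k N unfolding a_def using B \<pi>_in by blast
  interpret D: subseqs "\<lambda>k s. convergent (\<lambda>j. a k (s j))"
  proof
    fix k and s :: "nat \<Rightarrow> nat" assume "strict_mono s"
    have "bounded (range (\<lambda>j. a k (s j)))" unfolding bounded_real using abd by auto
    then obtain l r' where "strict_mono (r'::nat\<Rightarrow>nat)" "((\<lambda>j. a k (s j)) \<circ> r') \<longlonglongrightarrow> l"
      using bounded_imp_convergent_subsequence by blast
    then show "\<exists>r'. strict_mono r' \<and> convergent (\<lambda>j. a k ((s \<circ> r') j))"
      by (auto simp: convergent_def o_def)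
  qed
  define r where "r = D.diagseq"
  have r_mono: "strict_mono r" unfolding r_def by (rule D.subseq_diagseq)
  have conv_d: "convergent (\<lambda>j. a k (r j))" for k
  proof -
    have "convergent (\<lambda>j. a k ((D.diagseq \<circ> (+) (Suc k)) j))"
    proof (rule D.diagseq_holds)
      fix r s n assume "strict_mono (r::nat\<Rightarrow>nat)" "convergent (\<lambda>j. a n (s j))"
      then show "convergent (\<lambda>j. a n ((s \<circ> r) j))"
        using convergent_subseq_convergent[of "\<lambda>j. a n (s j)" r] by (simp add: o_def)
    qed
    then have "convergent (\<lambda>j. (\<lambda>j. a k (r j)) (j + Suc k))"
      by (simp add: r_def o_def add.commute)
    then show ?thesis using convergent_ignore_initial_segment[of "\<lambda>j. a k (r j)" "Suc k"] by simp
  qed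
  have densr: "(\<lambda>j. \<pi> (r j) x) \<longlonglongrightarrow> x" for x
    using LIMSEQ_subseq_LIMSEQ[OF dens r_mono] by (simp add: o_def)
  define H where "H = (\<lambda>x j. F (r j) (\<pi> (r j) x))"
  have cauchy: "Cauchy (H x)" for x
  proof (rule metric_CauchyI)
    fix e :: real assume e: "e > 0"
    obtain \<delta> where \<delta>: "\<delta> > 0" "\<And>N x y. x \<in> E N \<Longrightarrow> y \<in> E N \<Longrightarrow> dist x y < \<delta> \<Longrightarrow> \<bar>F N x - F N y\<bar> < e/3"
      using modl[of "e/3"] e by auto
    have d3: "\<delta>/3 > 0" using \<delta>(1) by simp
    have xC: "x \<in> closure C" using C(2) by simp
    obtain c where c: "c \<in> C" "dist c x < \<delta>/3" using xC d3 unfolding closure_approachable by blast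
    obtain k where k: "c = d k" using c(1) drange by auto
    have ev: "\<forall>\<^sub>F j in sequentially. dist (\<pi> (r j) x) x < \<delta>/3 \<and> dist (\<pi> (r j) c) c < \<delta>/3"
      using eventually_conj[OF tendstoD[OF densr[of x] d3] tendstoD[OF densr[of c] d3]] .
    then obtain M1 where M1: "\<And>j. j \<ge> M1 \<Longrightarrow> dist (\<pi> (r j) x) x < \<delta>/3 \<and> dist (\<pi> (r j) c) c < \<delta>/3"
      unfolding eventually_sequentially by blast
    have close: "\<bar>H x j - a k (r j)\<bar> < e/3" if "j \<ge> M1" for j
    proof -
      have "dist (\<pi> (r j) x) (\<pi> (r j) c) < \<delta>"
        using M1[OF that] c(2) dist_triangle[of "\<pi> (r j) x" "\<pi> (r j) c" x]
          dist_triangle[of x "\<pi> (r j) c" c] by (simp add: dist_commute)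
      then show ?thesis unfolding H_def a_def k[symmetric] by (rule \<delta>(2)[OF \<pi>_in \<pi>_in])
    qed
    have d3': "e/3 > 0" using e by simp
    have "Cauchy (\<lambda>j. a k (r j))" using conv_d[of k] by (simp add: Cauchy_convergent_iff)
    then obtain M2 where M2: "\<And>m n. m \<ge> M2 \<Longrightarrow> n \<ge> M2 \<Longrightarrow> dist (a k (r m)) (a k (r n)) < e/3"
      using d3' unfolding Cauchy_def by blast
    show "\<exists>M. \<forall>m\<ge>M. \<forall>n\<ge>M. dist (H x m) (H x n) < e"
    proof (intro exI[of _ "max M1 M2"] allI impI)
      fix m n assume "max M1 M2 \<le> m" "max M1 M2 \<le> n"
      then show "dist (H x m) (H x n) < e"
        using close[of m] close[of n] M2[of m n] unfolding dist_real_def by (simp add: abs_if split: if_splits)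
    qed
  qed
  define G where "G = (\<lambda>x. lim (H x))"
  have Hlim: "H x \<longlonglongrightarrow> G x" for x
    unfolding G_def using cauchy[of x] by (simp add: Cauchy_convergent_iff convergent_LIMSEQ_iff)
  have Gbd: "\<bar>G x\<bar> \<le> B" for x
  proof (rule LIMSEQ_le_const2[OF tendsto_rabs[OF Hlim[of x]]])
    show "\<exists>N. \<forall>n\<ge>N. \<bar>H x n\<bar> \<le> B" unfolding H_def using B \<pi>_in by blast
  qed
  have Gmod: "\<exists>\<delta>>0. \<forall>x y. dist x y < \<delta> \<longrightarrow> \<bar>G x - G y\<bar> \<le> \<epsilon>" if e: "\<epsilon> > 0" for \<epsilon>
  proof -
    obtain \<delta> where \<delta>: "\<delta> > 0" "\<And>N x y. x \<in> E N \<Longrightarrow> y \<in> E N \<Longrightarrow> dist x y < \<delta> \<Longrightarrow> \<bar>F N x - F N y\<bar> < \<epsilon>"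
      using modl[OF e] by auto
    show ?thesis
    proof (intro exI[of _ \<delta>] conjI allI impI)
      show "\<delta> > 0" by fact
      fix x y :: 'a assume xy: "dist x y < \<delta>"
      define \<eta> where "\<eta> = (\<delta> - dist x y) / 2"
      have \<eta>: "\<eta> > 0" using xy unfolding \<eta>_def by simp
      have ev: "\<forall>\<^sub>F j in sequentially. dist (\<pi> (r j) x) x < \<eta> \<and> dist (\<pi> (r j) y) y < \<eta>"
        using eventually_conj[OF tendstoD[OF densr[of x] \<eta>] tendstoD[OF densr[of y] \<eta>]] .
      then obtain M1 where M1: "\<And>j. j \<ge> M1 \<Longrightarrow> dist (\<pi> (r j) x) x < \<eta> \<and> dist (\<pi> (r j) y) y < \<eta>"
        unfolding eventually_sequentially by blast
      show "\<bar>G x - G y\<bar> \<le> \<epsilon>"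
      proof (rule LIMSEQ_le_const2[OF tendsto_rabs[OF tendsto_diff[OF Hlim[of x] Hlim[of y]]]])
        show "\<exists>N. \<forall>n\<ge>N. \<bar>H x n - H y n\<bar> \<le> \<epsilon>"
        proof (intro exI[of _ M1] allI impI)
          fix j assume j: "j \<ge> M1"
          have "dist (\<pi> (r j) x) (\<pi> (r j) y) < \<delta>"
            using M1[OF j] dist_triangle[of "\<pi> (r j) x" "\<pi> (r j) y" x]
              dist_triangle[of x "\<pi> (r j) y" y] unfolding \<eta>_def by (simp add: dist_commute)
          then have "\<bar>H x j - H y j\<bar> < \<epsilon>" unfolding H_def by (rule \<delta>(2)[OF \<pi>_in \<pi>_in])
          then show "\<bar>H x j - H y j\<bar> \<le> \<epsilon>" by simp
        qed
      qed
    qed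
  qed
  have ucG: "uniformly_continuous_on UNIV G"
    unfolding uniformly_continuous_on_def
  proof (intro allI impI)
    fix e :: real assume e: "e > 0"
    obtain \<delta> where "\<delta> > 0" "\<And>x y. dist x y < \<delta> \<Longrightarrow> \<bar>G x - G y\<bar> \<le> e/2"
      using Gmod[of "e/2"] e by auto
    moreover have "e/2 < e" using e by simp
    ultimately show "\<exists>\<delta>>0. \<forall>x\<in>UNIV. \<forall>x'\<in>UNIV. dist x' x < \<delta> \<longrightarrow> dist (G x') (G x) < e"
      unfolding dist_real_def by (meson order.strict_trans1)
  qed
  have bG: "bounded (range G)" unfolding bounded_real using Gbd by auto
  have part1: "\<forall>\<^sub>F j in sequentially. \<forall>x\<in>J \<inter> E (r j). \<bar>G x - F (r j) x\<bar> \<le> \<epsilon>"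
    if J: "compact J" and e: "\<epsilon> > 0" for J \<epsilon>
  proof -
    obtain \<delta>1 where \<delta>1: "\<delta>1 > 0" "\<And>N x y. x \<in> E N \<Longrightarrow> y \<in> E N \<Longrightarrow> dist x y < \<delta>1 \<Longrightarrow> \<bar>F N x - F N y\<bar> < \<epsilon>/3"
      using modl[of "\<epsilon>/3"] e by auto
    obtain \<delta>2 where \<delta>2: "\<delta>2 > 0" "\<And>x y. dist x y < \<delta>2 \<Longrightarrow> \<bar>G x - G y\<bar> \<le> \<epsilon>/3"
      using Gmod[of "\<epsilon>/3"] e by auto
    define \<delta> where "\<delta> = min \<delta>1 \<delta>2"
    have \<delta>: "\<delta> > 0" unfolding \<delta>_def using \<delta>1 \<delta>2 by simp
    have cov: "J \<subseteq> (\<Union>c\<in>J. ball c (\<delta>/2))" using \<delta> by auto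
    have "\<exists>K. K \<subseteq> J \<and> finite K \<and> J \<subseteq> (\<Union>c\<in>K. ball c (\<delta>/2))"
      by (rule compactE_image[OF J _ cov]) auto
    then obtain K where K: "K \<subseteq> J" "finite K" "J \<subseteq> (\<Union>c\<in>K. ball c (\<delta>/2))" by blast
    have evc: "\<forall>\<^sub>F j in sequentially. \<bar>G c - H c j\<bar> < \<epsilon>/3 \<and> dist (\<pi> (r j) c) c < \<delta>/2" for c
    proof -
      have e3: "\<epsilon>/3 > 0" and d2: "\<delta>/2 > 0" using e \<delta> by simp_all
      have "\<forall>\<^sub>F j in sequentially. dist (H c j) (G c) < \<epsilon>/3" using tendstoD[OF Hlim[of c] e3] .
      moreover have "\<forall>\<^sub>F j in sequentially. dist (\<pi> (r j) c) c < \<delta>/2" using tendstoD[OF densr[of c] d2] .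
      ultimately show ?thesis
        by eventually_elim (auto simp: dist_real_def abs_minus_commute)
    qed
    have "\<forall>\<^sub>F j in sequentially. \<forall>c\<in>K. \<bar>G c - H c j\<bar> < \<epsilon>/3 \<and> dist (\<pi> (r j) c) c < \<delta>/2"
      using K(2) evc by (intro eventually_ball_finite) auto
    then show ?thesis
    proof eventually_elim
      case (elim j)
      show ?case
      proof
        fix x assume x: "x \<in> J \<inter> E (r j)"
        then obtain c where c: "c \<in> K" "dist c x < \<delta>/2" using K(3) by auto
        have h1: "\<bar>G c - H c j\<bar> < \<epsilon>/3" "dist (\<pi> (r j) c) c < \<delta>/2" using elim c(1) by auto
        have "dist x (\<pi> (r j) c) < \<delta>1"
          using h1(2) c(2) dist_triangle[of x "\<pi> (r j) c" c] unfolding \<delta>_def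
          by (simp add: dist_commute)
        then have h2: "\<bar>F (r j) x - H c j\<bar> < \<epsilon>/3" unfolding H_def using \<delta>1(2) x \<pi>_in by blast
        have "\<delta> \<le> \<delta>2" unfolding \<delta>_def by simp
        then have "dist x c < \<delta>2" using c(2) zero_le_dist[of c x] dist_commute[of x c] by linarith
        then have h3: "\<bar>G x - G c\<bar> \<le> \<epsilon>/3" using \<delta>2(2) by blast
        show "\<bar>G x - F (r j) x\<bar> \<le> \<epsilon>" using h1(1) h2 h3 by linarith
      qed
    qed
  qed
  show ?thesis
    using bG ucG r_mono part1 Hlim unfolding H_def by blast
qed

end
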